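(* Assume (H1'), let $\phi$ be a sub-additive admissible policy, $r\in\mathbb N_+$, and $z^1,\dots,z^r$ (possibly identical) strong erasing words for $(G,\phi)$, with $m=\sum_{i=1}^r|z^i|/2$. Let $$\mathscr B^r(z^1,\dots,z^r)=\{V^0V^1\,V^0\circ\theta\,V^1\circ\theta\cdots V^0\circ\theta^{m-1}V^1\circ\theta^{m-1}=z^1z^2\cdots z^r\},\qquad \mathscr C^r_n=\mathscr A_n(\emptyset)\cap\theta^{-n}\mathscr B^r(z^1,\dots,z^r).$$ Then for every $Y\in\mathscr Y_2^r$ and every $n\ge1$, $\mathscr C^r_n\subset\mathscr A_{n+m}(Y)$ up to a $\mathbb P^0$-null set.
   Context: $G=(\mathcal V,\mathcal E)$ finite connected simple graph; $\mathcal S$ the set of lists of preferences (for each class a linear ordering of its neighbours); $\phi$ a policy with probability $\nu_\phi$ on $\mathcal S$; $\mathbb W=\{w\in\mathcal V^*:|w|_i|w|_j=0\text{ whenever } i,j\text{ adjacent}\}$, $\mathbb W_2$ its even-length words; admissible $\phi$: map $\odot_\phi$ with $w\odot_\phi(v,\sigma)=wv$ if no letter of $w$ is adjacent to $v$, else $w$ with one letter adjacent to $v$ (chosen by $\phi$) deleted; $Q_\phi(z_1\cdots z_k,\varsigma_1\cdots\varsigma_k)=(\cdots(\emptyset\odot_\phi(z_1,\varsigma_1))\cdots)\odot_\phi(z_k,\varsigma_k)$. Sub-additive: $|Q_\phi(z'z'',\varsigma'\varsigma'')|\le|Q_\phi(z',\varsigma')|+|Q_\phi(z'',\varsigma'')|$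 for all words with preferences in the support of $\nu_\phi$. Strong erasing word: $z$ of even length $2p$ such that $Q_\phi(ijz,\varsigma\varsigma')=\emptyset$ for all non-adjacent $i,j$ (possibly equal) and $Q_\phi(z_{2\ell+1}\cdots z_{2p},\varsigma'_{2\ell+1}\cdots\varsigma'_{2p})=\emptyset$ for $\ell=0,\dots,p-1$, for all preference words with letters in the support of $\nu_\phi$. (H1'): $(V_{2n},\Sigma_{2n},V_{2n+1},\Sigma_{2n+1})_{n\in\mathbb Z}$ stationary ergodic with $V_{2n}\sim\mu^0$, $V_{2n+1}\sim\mu^1$, $\Sigma_m\sim\nu_\phi$, $(\mu^0+\mu^1)/2$ of full support; canonical space $\Omega^0$ with law $\mathbb P^0$, shift $\theta$, and $0$-coordinate $(V^0,\Sigma^0,V^1,\Sigma^1)$. $U^{[Y]}_0=Y$, $U^{[Y]}_{n+1}=(U^{[Y]}_n\odot_\phi(V^0\circ\theta^n,\Sigma^0\circ\theta^n))\odot_\phi(V^1\circ\theta^n,\Sigma^1\circ\theta^n)$; $\mathscr A_n(Y)=\{U^{[Y]}_n=\emptyset\}$. $\mathscr Y_2^r$ is the set of $\mathbb W_2$-valued r.v.'s $Y$ with $|Y|\le2r$ a.s. *)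

theory Defs
  imports "HOL-Probability.Probability"
begin

definition simple_connected_graph :: "('v::finite \<Rightarrow> 'v \<Rightarrow> bool) \<Rightarrow> bool" where
  "simple_connected_graph E \<longleftrightarrow>
     (\<forall>i j. E i j \<longrightarrow> E j i) \<and> (\<forall>i. \<not> E i i) \<and> (\<forall>i j. E\<^sup>*\<^sup>* i j)"

text \<open>Lists of preferences: for each class i, a linear ordering (list without repetition)
 of the neighbours of i.\<close>
type_synonym 'v pref = "'v \<Rightarrow> 'v list"

definition prefs :: "('v \<Rightarrow> 'v \<Rightarrow> bool) \<Rightarrow> 'v pref set" where
  "prefs E = {\<sigma>. \<forall>i. distinct (\<sigma> i) \<and> set (\<sigma> i) = {j. E i j}}"

definition words_W :: "('v \<Rightarrow> 'v \<Rightarrow> bool) \<Rightarrow> 'v list set" where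
  "words_W E = {w. \<forall>i j. E i j \<longrightarrow> count_list w i * count_list w j = 0}"

definition words_W2 :: "('v \<Rightarrow> 'v \<Rightarrow> bool) \<Rightarrow> 'v list set" where
  "words_W2 E = {w \<in> words_W E. even (length w)}"

definition admissible ::
  "('v \<Rightarrow> 'v \<Rightarrow> bool) \<Rightarrow> ('v list \<Rightarrow> 'v \<Rightarrow> 'v pref \<Rightarrow> 'v list) \<Rightarrow> 'v pref set \<Rightarrow> bool" where
  "admissible E odot S \<longleftrightarrow>
     (\<forall>w \<in> words_W E. \<forall>v. \<forall>\<sigma> \<in> S.
        ((\<forall>x \<in> set w. \<not> E x v) \<longrightarrow> odot w v \<sigma> = w @ [v]) \<and>
        ((\<exists>x \<in> set w. E x v) \<longrightarrow>
           (\<exists>u1 x u2. w = u1 @ [x] @ u2 \<and> E x v \<and> odot w v \<sigma> = u1 @ u2)))"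

definition Q :: "('v list \<Rightarrow> 'v \<Rightarrow> 'v pref \<Rightarrow> 'v list) \<Rightarrow> 'v list \<Rightarrow> 'v pref list \<Rightarrow> 'v list" where
  "Q odot z s = foldl (\<lambda>w (v, \<sigma>). odot w v \<sigma>) [] (zip z s)"

definition sub_additive ::
  "('v list \<Rightarrow> 'v \<Rightarrow> 'v pref \<Rightarrow> 'v list) \<Rightarrow> 'v pref set \<Rightarrow> bool" where
  "sub_additive odot Supp \<longleftrightarrow>
     (\<forall>z1 z2 s1 s2. length s1 = length z1 \<longrightarrow> length s2 = length z2 \<longrightarrow>
        set s1 \<subseteq> Supp \<longrightarrow> set s2 \<subseteq> Supp \<longrightarrow>
        length (Q odot (z1 @ z2) (s1 @ s2)) \<le> length (Q odot z1 s1) + length (Q odot z2 s2))"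

definition strong_erasing ::
  "('v \<Rightarrow> 'v \<Rightarrow> bool) \<Rightarrow> ('v list \<Rightarrow> 'v \<Rightarrow> 'v pref \<Rightarrow> 'v list) \<Rightarrow> 'v pref set \<Rightarrow> 'v list \<Rightarrow> bool" where
  "strong_erasing E odot Supp z \<longleftrightarrow>
     even (length z) \<and>
     (\<forall>i j s s'. \<not> E i j \<longrightarrow> length s = 2 \<longrightarrow> length s' = length z \<longrightarrow>
        set s \<subseteq> Supp \<longrightarrow> set s' \<subseteq> Supp \<longrightarrow> Q odot ([i, j] @ z) (s @ s') = []) \<and>
     (\<forall>l < length z div 2. \<forall>s'. length s' = length z - 2 * l \<longrightarrow> set s' \<subseteq> Supp \<longrightarrow>
        Q odot (drop (2 * l) z) s' = [])"

type_synonym 'v omega = "int \<Rightarrow> ('v \<times> 'v pref \<times> 'v \<times> 'v pref)"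

definition canon_sets :: "'v omega measure" where
  "canon_sets = PiM UNIV (\<lambda>_. count_space UNIV)"

definition shift :: "nat \<Rightarrow> 'v omega \<Rightarrow> 'v omega" where
  "shift n \<omega> = (\<lambda>k. \<omega> (k + int n))"

definition V0 :: "'v omega \<Rightarrow> 'v" where "V0 \<omega> = fst (\<omega> 0)"
definition S0 :: "'v omega \<Rightarrow> 'v pref" where "S0 \<omega> = fst (snd (\<omega> 0))"
definition V1 :: "'v omega \<Rightarrow> 'v" where "V1 \<omega> = fst (snd (snd (\<omega> 0)))"
definition S1 :: "'v omega \<Rightarrow> 'v pref" where "S1 \<omega> = snd (snd (snd (\<omega> 0)))"

definition H1' :: "'v omega measure \<Rightarrow> 'v pmf \<Rightarrow> 'v pmf \<Rightarrow> 'v pref pmf \<Rightarrow> bool" where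
  "H1' P \<mu>0 \<mu>1 \<nu> \<longleftrightarrow>
     prob_space P \<and> space P = UNIV \<and> sets P = sets canon_sets \<and>
     shift 1 \<in> measurable P P \<and> distr P P (shift 1) = P \<and>
     (\<forall>A \<in> sets P. shift 1 -` A = A \<longrightarrow> measure P A = 0 \<or> measure P A = 1) \<and>
     distr P (count_space UNIV) V0 = measure_pmf \<mu>0 \<and>
     distr P (count_space UNIV) V1 = measure_pmf \<mu>1 \<and>
     distr P (count_space UNIV) S0 = measure_pmf \<nu> \<and>
     distr P (count_space UNIV) S1 = measure_pmf \<nu> \<and>
     (\<forall>v. (pmf \<mu>0 v + pmf \<mu>1 v) / 2 > 0)"

fun U :: "('v list \<Rightarrow> 'v \<Rightarrow> 'v pref \<Rightarrow> 'v list) \<Rightarrow> ('v omega \<Rightarrow> 'v list) \<Rightarrow> nat \<Rightarrow> 'v omega \<Rightarrow> 'v list" where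
  "U odot Y 0 \<omega> = Y \<omega>"
| "U odot Y (Suc n) \<omega> =
     odot (odot (U odot Y n \<omega>) (V0 (shift n \<omega>)) (S0 (shift n \<omega>))) (V1 (shift n \<omega>)) (S1 (shift n \<omega>))"

definition event_A :: "('v list \<Rightarrow> 'v \<Rightarrow> 'v pref \<Rightarrow> 'v list) \<Rightarrow> nat \<Rightarrow> ('v omega \<Rightarrow> 'v list) \<Rightarrow> 'v omega set" where
  "event_A odot n Y = {\<omega>. U odot Y n \<omega> = []}"

definition arrivals :: "nat \<Rightarrow> 'v omega \<Rightarrow> 'v list" where
  "arrivals k \<omega> = concat (map (\<lambda>i. [V0 (shift i \<omega>), V1 (shift i \<omega>)]) [0..<k])"

definition event_B :: "'v list list \<Rightarrow> 'v omega set" where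
  "event_B zs = {\<omega>. arrivals (sum_list (map length zs) div 2) \<omega> = concat zs}"

definition event_C :: "('v list \<Rightarrow> 'v \<Rightarrow> 'v pref \<Rightarrow> 'v list) \<Rightarrow> 'v list list \<Rightarrow> nat \<Rightarrow> 'v omega set" where
  "event_C odot zs n = event_A odot n (\<lambda>_. []) \<inter> shift n -` event_B zs"

definition rvs_Y2 :: "('v \<Rightarrow> 'v \<Rightarrow> bool) \<Rightarrow> 'v omega measure \<Rightarrow> nat \<Rightarrow> ('v omega \<Rightarrow> 'v list) set" where
  "rvs_Y2 E P r = {Y. Y \<in> measurable P (count_space UNIV) \<and> (\<forall>\<omega>. Y \<omega> \<in> words_W2 E) \<and>
                      (AE \<omega> in P. length (Y \<omega>) \<le> 2 * r)}"

end

theory Submission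
  imports Defs
begin

lemma W_iff: "w \<in> words_W E \<longleftrightarrow> (\<forall>i j. E i j \<longrightarrow> i \<notin> set w \<or> j \<notin> set w)"
  unfolding words_W_def by (auto simp: count_list_0_iff)

lemma W_snoc:
  assumes "w \<in> words_W E" "\<forall>x\<in>set w. \<not> E x v" "\<forall>i j. E i j \<longrightarrow> E j i" "\<forall>i. \<not> E i i"
  shows "w @ [v] \<in> words_W E"
  using assms unfolding W_iff by auto

lemma W_del:
  assumes "u1 @ [x] @ u2 \<in> words_W E"
  shows "u1 @ u2 \<in> words_W E"
  using assms unfolding W_iff by auto

lemma step_W:
  assumes adm: "admissible E odot S" and w: "w \<in> words_W E" and s: "\<sigma> \<in> S"
    and sym: "\<forall>i j. E i j \<longrightarrow> E j i" and irr: "\<forall>i. \<not> E i i"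
  shows "odot w v \<sigma> \<in> words_W E \<and> (even (length (odot w v \<sigma>)) \<longleftrightarrow> odd (length w))"
proof (cases "\<exists>x \<in> set w. E x v")
  case True
  then obtain u1 x u2 where "w = u1 @ [x] @ u2" "odot w v \<sigma> = u1 @ u2"
    using adm w s unfolding admissible_def by blast
  then show ?thesis using W_del w by auto
next
  case False
  then have "odot w v \<sigma> = w @ [v]" using adm w s unfolding admissible_def by blast
  then show ?thesis using W_snoc[OF w _ sym irr] False by auto
qed

lemma fold_W:
  assumes adm: "admissible E odot S"
    and sym: "\<forall>i j. E i j \<longrightarrow> E j i" and irr: "\<forall>i. \<not> E i i"
  shows "w \<in> words_W E \<Longrightarrow> set s \<subseteq> S \<Longrightarrow> length s = length z \<Longrightarrow>
     foldl (\<lambda>w (v, \<sigma>). odot w v \<sigma>) w (zip z s) \<in> words_W E \<and>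
     (even (length (foldl (\<lambda>w (v, \<sigma>). odot w v \<sigma>) w (zip z s))) \<longleftrightarrow> even (length w + length z))"
proof (induction z arbitrary: w s)
  case Nil
  then show ?case by simp
next
  case (Cons v z)
  then obtain \<sigma> s' where s: "s = \<sigma> # s'" by (cases s) auto
  have "odot w v \<sigma> \<in> words_W E \<and> (even (length (odot w v \<sigma>)) \<longleftrightarrow> odd (length w))"
    using step_W[OF adm Cons.prems(1) _ sym irr] Cons.prems s by auto
  then show ?case using Cons.IH[of "odot w v \<sigma>" s'] Cons.prems s by auto
qed

lemma Q_W:
  assumes adm: "admissible E odot S"
    and sym: "\<forall>i j. E i j \<longrightarrow> E j i" and irr: "\<forall>i. \<not> E i i"
  shows "w \<in> words_W E \<Longrightarrow> set s \<subseteq> S \<Longrightarrow> length s = length w \<Longrightarrow> Q odot w s = w"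
proof (induction w arbitrary: s rule: rev_induct)
  case Nil
  then show ?case by (simp add: Q_def)
next
  case (snoc v w)
  then obtain s' \<sigma> where s: "s = s' @ [\<sigma>]" by (cases s rule: rev_cases) auto
  have wW: "w \<in> words_W E" using snoc.prems(1) unfolding W_iff by auto
  have IH: "Q odot w s' = w" using snoc.IH[OF wW] snoc.prems s by auto
  have "\<forall>x\<in>set w. \<not> E x v" using snoc.prems(1) unfolding W_iff by auto
  then have "odot w v \<sigma> = w @ [v]" using adm wW snoc.prems s unfolding admissible_def by auto
  then show ?case using IH s snoc.prems unfolding Q_def by auto
qed

lemma fold_Q:
  assumes "length s0 = length w"
  shows "foldl (\<lambda>w (v, \<sigma>). odot w v \<sigma>) (Q odot w s0) (zip z s) = Q odot (w @ z) (s0 @ s)"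
  using assms unfolding Q_def by simp

lemma two_last: "2 \<le> length w \<Longrightarrow> \<exists>w1 i j. w = w1 @ [i, j]"
proof -
  assume "2 \<le> length w"
  then obtain ys y where w: "w = ys @ [y]" by (cases w rule: rev_cases) auto
  then have "ys \<noteq> []" using \<open>2 \<le> length w\<close> by auto
  then obtain xs x where "ys = xs @ [x]" by (cases ys rule: rev_cases) auto
  then show ?thesis using w by auto
qed

lemma erase_all:
  assumes adm: "admissible E odot S"
    and sym: "\<forall>i j. E i j \<longrightarrow> E j i" and irr: "\<forall>i. \<not> E i i"
    and subadd: "sub_additive odot S" and Sne: "\<sigma>0 \<in> S"
    and se: "\<forall>z\<in>set zs. strong_erasing E odot S z"
  shows "w \<in> words_W E \<Longrightarrow> even (length w) \<Longrightarrow> length w \<le> 2 * length zs \<Longrightarrow> set s \<subseteq> S \<Longrightarrow>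
     length s = length (concat zs) \<Longrightarrow> foldl (\<lambda>w (v, \<sigma>). odot w v \<sigma>) w (zip (concat zs) s) = []"
  using se
proof (induction zs arbitrary: w s)
  case Nil
  then show ?case by simp
next
  case (Cons z zs)
  define s1 where "s1 = take (length z) s"
  define s2 where "s2 = drop (length z) s"
  have s: "s = s1 @ s2" and l1: "length s1 = length z" and l2: "length s2 = length (concat zs)"
    and S1: "set s1 \<subseteq> S" and S2: "set s2 \<subseteq> S"
    using Cons.prems unfolding s1_def s2_def by (auto dest: in_set_takeD in_set_dropD)
  have sez: "strong_erasing E odot S z" using Cons.prems by auto
  then have ez: "even (length z)" unfolding strong_erasing_def by auto
  define w' where "w' = foldl (\<lambda>w (v, \<sigma>). odot w v \<sigma>) w (zip z s1)"
  have split: "foldl (\<lambda>w (v, \<sigma>). odot w v \<sigma>) w (zip (concat (z # zs)) s)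
      = foldl (\<lambda>w (v, \<sigma>). odot w v \<sigma>) w' (zip (concat zs) s2)"
    using l1 unfolding s w'_def by simp
  have w'W: "w' \<in> words_W E" and ew': "even (length w')"
    using fold_W[OF adm sym irr Cons.prems(1) S1 l1] Cons.prems(2) ez unfolding w'_def by auto
  have zne: "z \<noteq> []"
  proof
    assume z: "z = []"
    obtain i :: 'a where True by simp
    have iiW: "[i, i] \<in> words_W E" unfolding W_iff using irr by auto
    have "Q odot ([i, i] @ z) ([\<sigma>0, \<sigma>0] @ []) = []"
      using sez Sne irr unfolding strong_erasing_def z by auto
    moreover have "Q odot [i, i] [\<sigma>0, \<sigma>0] = [i, i]"
      using Q_W[OF adm sym irr iiW] Sne by auto
    ultimately show False using z by simp
  qed
  have bound: "length w' \<le> 2 * length zs"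
  proof (cases "w = []")
    case True
    then have "w' = Q odot z s1" unfolding w'_def Q_def by simp
    also have "\<dots> = []"
    proof -
      have "0 < length z div 2" using zne ez by (cases z) auto
      then show ?thesis using sez S1 l1 unfolding strong_erasing_def by force
    qed
    finally show ?thesis by simp
  next
    case False
    then have "2 \<le> length w" using Cons.prems(2) by (cases w; cases "tl w") auto
    then obtain w1 i j where w: "w = w1 @ [i, j]" using two_last by blast
    have w1W: "w1 \<in> words_W E" using Cons.prems(1) unfolding w W_iff by auto
    have nij: "\<not> E i j" using Cons.prems(1) unfolding w W_iff by auto
    define s0a where "s0a = replicate (length w1) \<sigma>0"
    have rS: "set s0a \<subseteq> S" using Sne unfolding s0a_def by (cases "length w1") auto
    have Qw: "Q odot w (s0a @ [\<sigma>0, \<sigma>0]) = w"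
      using Q_W[OF adm sym irr Cons.prems(1), of "s0a @ [\<sigma>0, \<sigma>0]"] Sne w rS unfolding s0a_def by auto
    have "w' = Q odot (w @ z) ((s0a @ [\<sigma>0, \<sigma>0]) @ s1)"
      unfolding w'_def
      using fold_Q[of "s0a @ [\<sigma>0, \<sigma>0]" w odot z s1] w Qw by (simp add: s0a_def)
    also have "\<dots> = Q odot (w1 @ ([i, j] @ z)) (s0a @ ([\<sigma>0, \<sigma>0] @ s1))" using w by simp
    finally have "length w' \<le> length (Q odot w1 s0a) + length (Q odot ([i, j] @ z) ([\<sigma>0, \<sigma>0] @ s1))"
      using subadd S1 l1 Sne rS unfolding sub_additive_def by (simp add: s0a_def)
    also have "Q odot w1 s0a = w1" using Q_W[OF adm sym irr w1W rS] unfolding s0a_def by auto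
    also have "Q odot ([i, j] @ z) ([\<sigma>0, \<sigma>0] @ s1) = []"
    proof -
      have "\<forall>i j s s'. \<not> E i j \<longrightarrow> length s = 2 \<longrightarrow> length s' = length z \<longrightarrow>
        set s \<subseteq> S \<longrightarrow> set s' \<subseteq> S \<longrightarrow> Q odot ([i, j] @ z) (s @ s') = []"
        using sez unfolding strong_erasing_def by blast
      from this[rule_format, of i j "[\<sigma>0, \<sigma>0]" s1] show ?thesis using nij S1 l1 Sne by simp
    qed
    finally show ?thesis using Cons.prems(3) w by simp
  qed
  show ?case unfolding split
    using Cons.IH[OF w'W ew' bound S2 l2] Cons.prems by auto
qed

lemma shift_shift: "shift i (shift n \<omega>) = shift (n + i) \<omega>"
  unfolding shift_def by (auto simp: algebra_simps)

lemma shift_0: "shift 0 \<omega> = \<omega>"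
  unfolding shift_def by auto

definition pseq :: "nat \<Rightarrow> 'v omega \<Rightarrow> 'v pref list" where
  "pseq k \<omega> = concat (map (\<lambda>i. [S0 (shift i \<omega>), S1 (shift i \<omega>)]) [0..<k])"

lemma len_arr: "length (arrivals k \<omega>) = 2 * k"
  unfolding arrivals_def by (induction k) auto

lemma len_pseq: "length (pseq k \<omega>) = 2 * k"
  unfolding pseq_def by (induction k) auto

lemma U_rep: "U odot Y (n + m) \<omega> =
  foldl (\<lambda>w (v, \<sigma>). odot w v \<sigma>) (U odot Y n \<omega>) (zip (arrivals m (shift n \<omega>)) (pseq m (shift n \<omega>)))"
proof (induction m)
  case 0
  then show ?case by (simp add: arrivals_def pseq_def)
next
  case (Suc m)
  have a: "arrivals (Suc m) (shift n \<omega>) = arrivals m (shift n \<omega>) @ [V0 (shift (n+m) \<omega>), V1 (shift (n+m) \<omega>)]"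
    unfolding arrivals_def by (simp add: shift_shift)
  have p: "pseq (Suc m) (shift n \<omega>) = pseq m (shift n \<omega>) @ [S0 (shift (n+m) \<omega>), S1 (shift (n+m) \<omega>)]"
    unfolding pseq_def by (simp add: shift_shift)
  show ?case using Suc.IH unfolding a p by (simp add: len_arr len_pseq)
qed

lemma shift_distr:
  assumes H1: "H1' P \<mu>0 \<mu>1 \<nu>"
  shows "shift k \<in> measurable P P \<and> distr P P (shift k) = P"
proof (induction k)
  case 0
  have "shift 0 = (\<lambda>x::'a omega. x)" by (rule ext) (simp add: shift_0)
  then show ?case by simp
next
  case (Suc k)
  have m1: "shift 1 \<in> measurable P P" and d1: "distr P P (shift 1) = P"
    using H1 unfolding H1'_def by auto
  have e: "shift (Suc k) = shift 1 \<circ> shift k" by (rule ext) (simp add: shift_shift)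
  have "shift (Suc k) \<in> measurable P P" unfolding e using Suc m1 by (auto intro: measurable_comp)
  moreover have "distr P P (shift (Suc k)) = P"
    unfolding e using Suc m1 d1 distr_distr[of "shift 1" P P "shift k" P] by simp
  ultimately show ?case by simp
qed

lemma count_meas: "f \<in> measurable (count_space UNIV) (count_space UNIV)"
  by simp

lemma comp0_meas:
  assumes H1: "H1' P \<mu>0 \<mu>1 \<nu>"
  shows "(\<lambda>\<omega>::'a omega. g (\<omega> 0)) \<in> measurable P (count_space UNIV)"
proof -
  have s: "sets P = sets canon_sets" using H1 unfolding H1'_def by auto
  have "(\<lambda>\<omega>::'a omega. \<omega> 0) \<in> measurable canon_sets (count_space UNIV)"
    unfolding canon_sets_def by (rule measurable_component_singleton) simp
  then have "(\<lambda>\<omega>::'a omega. g (\<omega> 0)) \<in> measurable canon_sets (count_space UNIV)"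
    using measurable_comp[OF _ count_meas[of g]] by (simp add: comp_def)
  then show ?thesis using measurable_cong_sets[of P canon_sets "count_space UNIV" "count_space UNIV"] s by simp
qed

lemma AE_prefs:
  assumes H1: "H1' P \<mu>0 \<mu>1 \<nu>"
  shows "AE \<omega> in P. \<forall>k. S0 (shift k \<omega>) \<in> set_pmf \<nu> \<and> S1 (shift k \<omega>) \<in> set_pmf \<nu>"
proof -
  have mS0: "S0 \<in> measurable P (count_space UNIV)"
    using comp0_meas[OF H1, of "\<lambda>x. fst (snd x)"] unfolding S0_def by simp
  have mS1: "S1 \<in> measurable P (count_space UNIV)"
    using comp0_meas[OF H1, of "\<lambda>x. snd (snd (snd x))"] unfolding S1_def by simp
  have dS0: "distr P (count_space UNIV) S0 = measure_pmf \<nu>" and dS1: "distr P (count_space UNIV) S1 = measure_pmf \<nu>"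
    using H1 unfolding H1'_def by auto
  have "AE \<omega> in P. S0 (shift k \<omega>) \<in> set_pmf \<nu> \<and> S1 (shift k \<omega>) \<in> set_pmf \<nu>" for k
  proof -
    have sk: "shift k \<in> measurable P P" "distr P P (shift k) = P" using shift_distr[OF H1] by auto
    have "AE x in distr (distr P P (shift k)) (count_space UNIV) S0. x \<in> set_pmf \<nu>"
      unfolding sk(2) dS0 by (rule AE_measure_pmf)
    then have "AE x in distr P (count_space UNIV) (S0 \<circ> shift k). x \<in> set_pmf \<nu>"
      using distr_distr[OF mS0 sk(1)] by argo
    then have a0: "AE \<omega> in P. S0 (shift k \<omega>) \<in> set_pmf \<nu>"
      using AE_distr_iff[OF measurable_comp[OF sk(1) mS0], of "\<lambda>x. x \<in> set_pmf \<nu>"] by simp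
    have "AE x in distr (distr P P (shift k)) (count_space UNIV) S1. x \<in> set_pmf \<nu>"
      unfolding sk(2) dS1 by (rule AE_measure_pmf)
    then have "AE x in distr P (count_space UNIV) (S1 \<circ> shift k). x \<in> set_pmf \<nu>"
      using distr_distr[OF mS1 sk(1)] by argo
    then have a1: "AE \<omega> in P. S1 (shift k \<omega>) \<in> set_pmf \<nu>"
      using AE_distr_iff[OF measurable_comp[OF sk(1) mS1], of "\<lambda>x. x \<in> set_pmf \<nu>"] by simp
    show ?thesis using a0 a1 by auto
  qed
  then show ?thesis by (simp add: AE_all_countable)
qed

lemma pseq_S: "\<forall>k. S0 (shift k \<omega>) \<in> S \<and> S1 (shift k \<omega>) \<in> S \<Longrightarrow> set (pseq m (shift n \<omega>)) \<subseteq> S"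
  unfolding pseq_def by (auto simp: shift_shift)


theorem mainTheorem13:
  fixes E :: "'v::finite \<Rightarrow> 'v \<Rightarrow> bool"
    and odot :: "'v list \<Rightarrow> 'v \<Rightarrow> 'v pref \<Rightarrow> 'v list"
    and \<nu> :: "'v pref pmf" and \<mu>0 \<mu>1 :: "'v pmf"
    and P :: "'v omega measure"
    and r :: nat and zs :: "'v list list"
  assumes G: "simple_connected_graph E"
    and nu_S: "set_pmf \<nu> \<subseteq> prefs E"
    and adm: "admissible E odot (set_pmf \<nu>)"
    and subadd: "sub_additive odot (set_pmf \<nu>)"
    and H1: "H1' P \<mu>0 \<mu>1 \<nu>"
    and r_pos: "r \<ge> 1"
    and zs_len: "length zs = r"
    and zs_se: "\<forall>z \<in> set zs. strong_erasing E odot (set_pmf \<nu>) z"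
  shows "\<forall>Y \<in> rvs_Y2 E P r. \<forall>n \<ge> 1.
           AE \<omega> in P. \<omega> \<in> event_C odot zs n \<longrightarrow>
             \<omega> \<in> event_A odot (n + sum_list (map length zs) div 2) Y"

proof (intro ballI allI impI)
  fix Y and n :: nat assume Y: "Y \<in> rvs_Y2 E P r" and n: "n \<ge> 1"
  have sym: "\<forall>i j. E i j \<longrightarrow> E j i" and irr: "\<forall>i. \<not> E i i"
    using G unfolding simple_connected_graph_def by auto
  obtain \<sigma>0 where s0: "\<sigma>0 \<in> set_pmf \<nu>" using set_pmf_not_empty by fast
  define m where "m = sum_list (map length zs) div 2"
  have AEY: "AE \<omega> in P. length (Y \<omega>) \<le> 2 * r" using Y unfolding rvs_Y2_def by auto
  show "AE \<omega> in P. \<omega> \<in> event_C odot zs n \<longrightarrow> \<omega> \<in> event_A odot (n + sum_list (map length zs) div 2) Y"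
    using AE_prefs[OF H1] AEY
  proof eventually_elim
    case (elim \<omega>)
    show ?case unfolding m_def[symmetric]
    proof
      assume C: "\<omega> \<in> event_C odot zs n"
      have U0: "U odot (\<lambda>_. []) n \<omega> = []" and B: "arrivals m (shift n \<omega>) = concat zs"
        using C unfolding event_C_def event_A_def event_B_def m_def by auto
      have YW: "Y \<omega> \<in> words_W E" "even (length (Y \<omega>))" using Y unfolding rvs_Y2_def words_W2_def by auto
      define arr where "arr = arrivals n \<omega>"
      define ps where "ps = pseq n \<omega>"
      have psS: "set ps \<subseteq> set_pmf \<nu>" using pseq_S[OF elim(1), of n 0] unfolding ps_def by (simp add: shift_0)
      have lps: "length ps = length arr" unfolding ps_def arr_def by (simp add: len_arr len_pseq)
      have repY: "U odot Y n \<omega> = foldl (\<lambda>w (v, \<sigma>). odot w v \<sigma>) (Y \<omega>) (zip arr ps)"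
        using U_rep[of odot Y 0 n \<omega>] unfolding arr_def ps_def by (simp add: shift_0)
      have rep0: "U odot (\<lambda>_. []) n \<omega> = Q odot arr ps"
        using U_rep[of odot "\<lambda>_. []" 0 n \<omega>] unfolding arr_def ps_def Q_def by (simp add: shift_0)
      define sY where "sY = replicate (length (Y \<omega>)) \<sigma>0"
      have sYS: "set sY \<subseteq> set_pmf \<nu>" using s0 unfolding sY_def by (cases "length (Y \<omega>)") auto
      have QY: "Q odot (Y \<omega>) sY = Y \<omega>" using Q_W[OF adm sym irr YW(1) sYS] unfolding sY_def by simp
      have "U odot Y n \<omega> = Q odot (Y \<omega> @ arr) (sY @ ps)"
        unfolding repY using fold_Q[of sY "Y \<omega>" odot arr ps] QY by (simp add: sY_def)
      then have "length (U odot Y n \<omega>) \<le> length (Q odot (Y \<omega>) sY) + length (Q odot arr ps)"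
        using subadd sYS psS lps unfolding sub_additive_def by (simp add: sY_def)
      then have lenU: "length (U odot Y n \<omega>) \<le> 2 * length zs"
        using QY rep0 U0 elim(2) zs_len by simp
      have UW: "U odot Y n \<omega> \<in> words_W E" "even (length (U odot Y n \<omega>))"
        using fold_W[OF adm sym irr YW(1) psS lps] YW(2) unfolding repY lps[symmetric] ps_def
        by (auto simp: len_pseq)
      have ps2S: "set (pseq m (shift n \<omega>)) \<subseteq> set_pmf \<nu>" using pseq_S[OF elim(1)] .
      have lps2: "length (pseq m (shift n \<omega>)) = length (concat zs)"
        using B len_arr[of m "shift n \<omega>"] by (simp add: len_pseq)
      have "U odot Y (n + m) \<omega> = []"
        unfolding U_rep B
        by (rule erase_all[OF adm sym irr subadd s0 zs_se UW(1) UW(2) lenU ps2S lps2])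
      then show "\<omega> \<in> event_A odot (n + m) Y" unfolding event_A_def by simp
    qed
  qed
qed

end
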